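(* Let $X\in\mathbb{R}^{n\times p}$ be a fixed matrix with rows $X_1^\top,\dots,X_n^\top$ and nonzero columns $V_1,\dots,V_p$, let $\beta\in\mathbb{R}^p$, let $\epsilon$ be a random vector in $\mathbb{R}^n$, and let $D\subset\mathbb{R}^p$. Let $G:\mathbb{R}^n\to\mathbb{R}$ be a function, and let $\psi=(\psi_1,\dots,\psi_n)$, $\varphi=(\varphi_1,\dots,\varphi_n)$ with each $\psi_i,\varphi_i:\mathbb{R}\to\mathbb{R}$. Fix $q\in(0,1)$ and $c_0>0$. Suppose: (i) there is $c_1>0$ such that $$\Pr\Big\{|\langle \epsilon,\varphi(Xv)-\varphi(X\beta)\rangle|\le c_1\sqrt{n}\,\|v-\beta\|_1 \text{ for all } v\in D\Big\}\ge 1-c_0q;$$ (ii) there is $c_3>0$ such that $G(\psi(z)-\psi(X\beta))\ge c_3\|z-X\beta\|_2^2$ for all $z\in\{Xv: v\in D\}$. Define $$\mu_X=\max_{1\le i<j\le p}\frac{|V_i^\top V_j|}{\|V_i\|_2\|V_j\|_2},\quad a_X=\min_{1\le i\le p}\frac{\|V_i\|_2^2}{n},\quad b_X=\max_{1\le i\le p}\frac{\|V_i\|_2^2}{n},$$ and suppose $a_X+b_X\mu_X>6b_X|\mathrm{spt}(\beta)|\mu_X$. Fix $\tau>0$ such that $$a_X+b_X\mu_X>2b_X(3+4\tau)|\mathrm{spt}(\beta)|\mu_X,$$ and let $c_r=2(1+1/\tau)c_1\sqrt{n}$ and $$\kappa_r=\frac{3(2+1/\tau)\sqrt{2+(1+2\tau)^2}}{a_X+b_X\mu_X}\cdot\frac{c_1}{c_3}.$$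 If $\hat\beta\in D$ is a random variable that always satisfies $$G(\psi(X\hat\beta)-\psi(X\beta))\le 2|\langle\epsilon,\varphi(X\hat\beta)-\varphi(X\beta)\rangle| - c_r(\|\hat\beta\|_1-\|\beta\|_1),$$ then $$\Pr\Big\{\|\hat\beta-\beta\|_2\le \kappa_r\sqrt{|\mathrm{spt}(\beta)|/n}\Big\}\ge 1-c_0q.$$
   Context: For functions $g_1,\dots,g_n:\mathbb{R}\to\mathbb{R}$, $g=(g_1,\dots,g_n)$ and $x\in\mathbb{R}^n$, write $g(x)=(g_1(x_1),\dots,g_n(x_n))^\top$. For $v\in\mathbb{R}^p$, $\|v\|_a$ is the $\ell_a$-norm, and $\mathrm{spt}(v)=\{i: v_i\neq 0\}$ is the support of $v$, with $|\mathrm{spt}(v)|$ its cardinality. $\langle\cdot,\cdot\rangle$ is the Euclidean inner product on $\mathbb{R}^n$. *)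

theory Defs
  imports "HOL-Probability.Probability"
begin

definition compw :: "('n \<Rightarrow> real \<Rightarrow> real) \<Rightarrow> real^'n \<Rightarrow> real^'n" where
  "compw g x = (\<chi> i. g i (x $ i))"

definition l1norm :: "real^'n \<Rightarrow> real" where
  "l1norm v = (\<Sum>i\<in>UNIV. \<bar>v $ i\<bar>)"

definition spt :: "real^'n \<Rightarrow> 'n set" where
  "spt v = {i. v $ i \<noteq> 0}"

definition mu_X :: "real^'p^'n \<Rightarrow> real" where
  "mu_X X = (if CARD('p) \<ge> 2 then
     Max {\<bar>column i X \<bullet> column j X\<bar> / (norm (column i X) * norm (column j X)) | i j. i \<noteq> j}
   else 0)"

definition a_X :: "real^'p^'n \<Rightarrow> real" where
  "a_X X = Min {(norm (column i X))\<^sup>2 / real CARD('n) | i. True}"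

definition b_X :: "real^'p^'n \<Rightarrow> real" where
  "b_X X = Max {(norm (column i X))\<^sup>2 / real CARD('n) | i. True}"

end

theory Submission
  imports Defs "HOL-Probability.Probability"
begin

lemma inner_Xv:
  fixes X :: "real^'p^'n"
  shows "inner (X *v g) (X *v k) = (\<Sum>i\<in>UNIV. \<Sum>j\<in>UNIV. g$i * k$j * (column i X \<bullet> column j X))"
  apply (simp add: matrix_mult_sum scalar_mult_eq_scaleR inner_sum_left inner_sum_right sum_distrib_left mult.assoc)
  apply (subst sum.swap) apply (simp add: mult_ac)
  done

lemma gram:
  fixes X :: "real^'p^'n"
  assumes off: "\<And>i j. i \<noteq> j \<Longrightarrow> \<bar>column i X \<bullet> column j X\<bar> \<le> Bp"
  shows "\<bar>inner (X *v g) (X *v k) - (\<Sum>i\<in>UNIV. g$i * k$i * (column i X \<bullet> column i X))\<bar>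
     \<le> Bp * (l1norm g * l1norm k - (\<Sum>i\<in>UNIV. \<bar>g$i\<bar> * \<bar>k$i\<bar>))"
proof -
  let ?G = "\<lambda>i j. column i X \<bullet> column j X"
  have split: "\<And>i. (\<Sum>j\<in>UNIV. g$i * k$j * ?G i j) = g$i * k$i * ?G i i + (\<Sum>j\<in>UNIV-{i}. g$i * k$j * ?G i j)"
    by (subst sum.remove[where x=i]) simp_all
  have split2: "\<And>i. (\<Sum>j\<in>UNIV. \<bar>g$i\<bar> * \<bar>k$j\<bar>) = \<bar>g$i\<bar> * \<bar>k$i\<bar> + (\<Sum>j\<in>UNIV-{i}. \<bar>g$i\<bar> * \<bar>k$j\<bar>)"
    by (subst sum.remove[where x=i]) simp_all
  have "inner (X *v g) (X *v k) - (\<Sum>i\<in>UNIV. g$i * k$i * ?G i i) = (\<Sum>i\<in>UNIV. \<Sum>j\<in>UNIV-{i}. g$i * k$j * ?G i j)"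
    unfolding inner_Xv split by (simp add: sum.distrib)
  also have "\<bar>\<dots>\<bar> \<le> (\<Sum>i\<in>UNIV. \<Sum>j\<in>UNIV-{i}. \<bar>g$i * k$j * ?G i j\<bar>)"
    by (rule order_trans[OF sum_abs sum_mono]) (rule sum_abs)
  also have "\<dots> \<le> (\<Sum>i\<in>UNIV. \<Sum>j\<in>UNIV-{i}. \<bar>g$i\<bar> * \<bar>k$j\<bar> * Bp)"
    apply (rule sum_mono, rule sum_mono)
    apply (simp add: abs_mult)
    apply (rule mult_left_mono)
    using off by auto
  also have "\<dots> = Bp * (\<Sum>i\<in>UNIV. \<Sum>j\<in>UNIV-{i}. \<bar>g$i\<bar> * \<bar>k$j\<bar>)"
    by (simp add: sum_distrib_left sum_distrib_right mult.commute mult.left_commute)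
  also have "(\<Sum>i\<in>UNIV. \<Sum>j\<in>UNIV-{i}. \<bar>g$i\<bar> * \<bar>k$j\<bar>) = l1norm g * l1norm k - (\<Sum>i\<in>UNIV. \<bar>g$i\<bar> * \<bar>k$i\<bar>)"
    unfolding l1norm_def sum_product
    by (simp add: split2 sum.distrib)
  finally show ?thesis .
qed


lemma l1: fixes c1 sn d ss c3 n A c :: real
  assumes "c3 > 0" "n > 0" "A > 0" "c \<ge> 0"
  shows "(2*c1* sn*d* ss)/(c3*(n*A*(1/(2*(1+c))))) = 4*(1+c)*d/A*(c1/c3)*(ss* sn/n)"
  using assms by (simp add: field_simps)
lemma l2: fixes s n :: real assumes "n > 0" shows "sqrt s* sqrt n/n = sqrt(s/n)"
proof -
  have e: "n = sqrt n * sqrt n" using assms by simp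
  have "sqrt s* sqrt n/n = sqrt s* sqrt n/(sqrt n * sqrt n)" using e by simp
  also have "\<dots> = sqrt s / sqrt n" using assms
    by (metis (no_types) nonzero_mult_div_cancel_right real_sqrt_gt_0_iff less_irrefl times_divide_eq_right divide_divide_eq_left)
  finally show ?thesis by (simp add: real_sqrt_divide)
qed

lemma final_arith:
  fixes F P y2 z2 t u s n A bmu c1 c3 \<tau> :: real
  assumes n: "n > 0" and c1: "c1 > 0" and c3: "c3 > 0" and tau: "\<tau> > 0"
    and t: "t \<ge> 0" and u: "u \<ge> 0" and y2: "y2 \<ge> 0" and z2: "z2 \<ge> 0" and s: "s \<ge> 0"
    and bmu: "bmu \<ge> 0"
    and hF: "F \<ge> n*A*y2 - n*bmu*t\<^sup>2 - 2*n*bmu*t*u + P"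
    and P0: "P \<ge> 0" and P1: "P \<ge> n*A*z2 - n*bmu*u\<^sup>2"
    and ts: "t\<^sup>2 \<le> s*y2" and cone: "u \<le> (1+2*\<tau>)*t"
    and hc3: "c3*F \<le> 2*c1* sqrt n*(2+1/\<tau>)*t"
    and cond: "A > 2*bmu*(3+4*\<tau>)* s"
  shows "sqrt (y2+z2) \<le> 3*(2+1/\<tau>)* sqrt(2+(1+2*\<tau>)\<^sup>2)/A*(c1/c3)* sqrt(s/n)"
proof -
  define w where "w = (1+2*\<tau>)\<^sup>2"
  define c where "c = w/(6+8*\<tau>)"
  define \<theta> where "\<theta> = 1/(2*(1+c))"
  have w0: "w \<ge> 0" unfolding w_def by simp
  have c0: "c \<ge> 0" unfolding c_def using w0 tau by simp
  have th0: "\<theta> > 0" "\<theta> \<le> 1" unfolding \<theta>_def using c0 by (auto simp: field_simps)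
  have thc: "\<theta>*(1+c) = 1/2" unfolding \<theta>_def using c0 by (simp add: field_simps)
  have bs0: "bmu* s \<ge> 0" using bmu s by simp
  have condA: "bmu* s*(6+8*\<tau>) < A" using cond by (simp add: algebra_simps)
  have "bmu* s*(6+8*\<tau>) \<ge> 0" using bs0 tau by simp
  hence A0: "A > 0" using condA by linarith
  have tu: "t*u \<le> (1+2*\<tau>)*(s*y2)"
  proof -
    have "t*u \<le> t*((1+2*\<tau>)*t)" using cone t by (simp add: mult_left_mono)
    also have "\<dots> = (1+2*\<tau>)*t\<^sup>2" by (simp add: power2_eq_square)
    also have "\<dots> \<le> (1+2*\<tau>)*(s*y2)" using ts tau by (intro mult_left_mono) auto
    finally show ?thesis .
  qed
  have uu: "u\<^sup>2 \<le> w*(s*y2)"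
  proof -
    have "u\<^sup>2 \<le> ((1+2*\<tau>)*t)\<^sup>2" using cone u by (intro power_mono) auto
    also have "\<dots> = w*t\<^sup>2" unfolding w_def by (simp add: power_mult_distrib)
    also have "\<dots> \<le> w*(s*y2)" using ts w0 by (intro mult_left_mono) auto
    finally show ?thesis .
  qed
  have P2: "P \<ge> \<theta>*(n*A*z2 - n*bmu*u\<^sup>2)"
  proof (cases "n*A*z2 - n*bmu*u\<^sup>2 \<le> 0")
    case True thus ?thesis using P0 th0 by (meson mult_nonneg_nonpos order_trans less_imp_le)
  next
    case False
    hence "\<theta>*(n*A*z2 - n*bmu*u\<^sup>2) \<le> 1*(n*A*z2 - n*bmu*u\<^sup>2)" using th0 by (intro mult_right_mono) auto
    thus ?thesis using P1 by simp
  qed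
  have nb: "n*bmu \<ge> 0" using n bmu by simp
  have e1: "n*bmu*t\<^sup>2 \<le> n*(bmu* s)*y2" using mult_left_mono[OF ts nb] by (simp add: mult_ac)
  have e2: "n*bmu*t*u \<le> n*(bmu* s)*(1+2*\<tau>)*y2" using mult_left_mono[OF tu nb] by (simp add: mult_ac)
  have e3: "n*bmu*u\<^sup>2 \<le> n*(bmu* s)*w*y2" using mult_left_mono[OF uu nb] by (simp add: mult_ac)
  have Fb: "F \<ge> n*A*y2 - n*(bmu* s)*(3+4*\<tau>)*y2 + \<theta>*(n*A*z2 - n*(bmu* s)*w*y2)"
  proof -
    have "\<theta>*(n*A*z2 - n*bmu*u\<^sup>2) \<ge> \<theta>*(n*A*z2 - n*(bmu* s)*w*y2)"
      using e3 th0 by (intro mult_left_mono) auto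
    thus ?thesis using hF P2 e1 e2 by (simp add: algebra_simps)
  qed
  have k1: "(bmu* s)*(3+4*\<tau>) \<le> A/2" using condA by (simp add: algebra_simps)
  have k2: "(bmu* s)*w \<le> c*A"
  proof -
    have "(bmu* s)*w = (bmu* s*(6+8*\<tau>))*c" unfolding c_def using tau by (simp add: field_simps)
    also have "\<dots> \<le> A*c" using condA c0 by (intro mult_right_mono) auto
    finally show ?thesis by (simp add: mult.commute)
  qed
  have ny: "n*y2 \<ge> 0" using n y2 by simp
  have Fb2: "F \<ge> n*A*\<theta>*(y2+z2)"
  proof -
    have a1: "n*(bmu* s)*(3+4*\<tau>)*y2 \<le> n*(A/2)*y2"
      using mult_right_mono[OF k1 ny] by (simp add: algebra_simps)
    have a2: "\<theta>*(n*(bmu* s)*w*y2) \<le> \<theta>*(n*(c*A)*y2)"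
      using mult_right_mono[OF k2 ny] th0 by (intro mult_left_mono) (auto simp: algebra_simps)
    have hh: "1/2 - \<theta>*c = \<theta>" using thc by (simp add: algebra_simps)
    have "n*A*y2 - n*(A/2)*y2 + \<theta>*(n*A*z2 - n*(c*A)*y2) = n*A*y2*(1/2 - \<theta>*c) + n*A*\<theta>*z2"
      by (simp add: algebra_simps)
    hence "n*A*\<theta>*(y2+z2) = n*A*y2 - n*(A/2)*y2 + \<theta>*(n*A*z2 - n*(c*A)*y2)"
      unfolding hh by (simp add: algebra_simps)
    thus ?thesis using Fb a1 a2 by (simp add: algebra_simps)
  qed
  define r where "r = sqrt (y2+z2)"
  have r0: "r \<ge> 0" unfolding r_def using y2 z2 by simp
  have r2: "r\<^sup>2 = y2+z2" unfolding r_def using y2 z2 by simp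
  have tr: "t \<le> sqrt s * r"
  proof -
    have "t = sqrt (t\<^sup>2)" using t by simp
    also have "\<dots> \<le> sqrt (s*y2)" using real_sqrt_le_mono[OF ts] t by simp
    also have "\<dots> \<le> sqrt (s*(y2+z2))" using s z2 by (intro real_sqrt_le_mono mult_left_mono) auto
    also have "\<dots> = sqrt s * r" unfolding r_def by (simp add: real_sqrt_mult)
    finally show ?thesis .
  qed
  define K where "K = 2*c1* sqrt n*(2+1/\<tau>)* sqrt s"
  have K0: "K \<ge> 0" unfolding K_def using c1 tau n s by (simp add: less_imp_le)
  have main: "c3*(n*A*\<theta>)*r\<^sup>2 \<le> K*r"
  proof -
    have "c3*(n*A*\<theta>)*r\<^sup>2 \<le> c3*F" using Fb2 c3 r2 by (simp add: mult.assoc)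
    also have "\<dots> \<le> 2*c1* sqrt n*(2+1/\<tau>)*t" by (rule hc3)
    also have "\<dots> \<le> 2*c1* sqrt n*(2+1/\<tau>)*(sqrt s * r)"
      using tr c1 tau n by (intro mult_left_mono) (auto simp: less_imp_le)
    finally show ?thesis unfolding K_def by (simp add: mult_ac)
  qed
  have pos: "c3*(n*A*\<theta>) > 0" using c3 n A0 th0 by simp
  have rb: "r \<le> K/(c3*(n*A*\<theta>))"
  proof (cases "r = 0")
    case True thus ?thesis using K0 pos by simp
  next
    case False
    hence rp: "r > 0" using r0 by simp
    have "c3*(n*A*\<theta>)*r \<le> K" using main rp by (simp add: power2_eq_square mult.assoc[symmetric])
    thus ?thesis using pos by (simp add: field_simps)
  qed
  have cw: "c \<le> sqrt w / 4"
  proof -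
    have sw: "sqrt w = 1+2*\<tau>" unfolding w_def using tau by simp
    have "c = (1+2*\<tau>)*((1+2*\<tau>)/(6+8*\<tau>))" unfolding c_def w_def using tau by (simp add: power2_eq_square)
    also have "\<dots> \<le> (1+2*\<tau>)*(1/4)" using tau by (intro mult_left_mono) (auto simp: field_simps)
    finally show ?thesis using sw by simp
  qed
  have key: "4*(1+c) \<le> 3* sqrt(2+w)"
  proof -
    have "(4*(1+c))\<^sup>2 \<le> (3* sqrt(2+w))\<^sup>2"
    proof -
      have "(4*(1+c))\<^sup>2 \<le> (4*(1+sqrt w/4))\<^sup>2" using cw c0 by (intro power_mono) auto
      also have "\<dots> = 16 + 8* sqrt w + w" using w0 by (simp add: power2_eq_square algebra_simps)
      also have "\<dots> \<le> 9*(2+w)"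
      proof -
        have q1: "(sqrt w)\<^sup>2 = w" using w0 by simp
        have q2: "0 \<le> (sqrt w - 1/2)\<^sup>2" by simp
        have q3: "(sqrt w - 1/2)\<^sup>2 = (sqrt w)\<^sup>2 - sqrt w + 1/4" using power2_diff[of "sqrt w" "1/2"] by (simp only:) (simp add: power2_eq_square del: real_sqrt_mult_self)
        have "0 \<le> w - sqrt w + 1/4" using q2 unfolding q3 q1 .
        thus ?thesis by argo
      qed
      also have "\<dots> = (3* sqrt(2+w))\<^sup>2" using w0 by (simp add: power_mult_distrib)
      finally show ?thesis .
    qed
    thus ?thesis by (rule power2_le_imp_le) (use w0 in simp)
  qed
  have "K/(c3*(n*A*\<theta>)) = 4*(1+c)*(2+1/\<tau>)/A*(c1/c3)*(sqrt s* sqrt n/n)"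
    unfolding K_def \<theta>_def by (rule l1) (use c3 n A0 c0 in auto)
  also have "\<dots> = 4*(1+c)*(2+1/\<tau>)/A*(c1/c3)* sqrt(s/n)" using l2[OF n] by simp
  also have "\<dots> \<le> 3* sqrt(2+w)*(2+1/\<tau>)/A*(c1/c3)* sqrt(s/n)"
    using key A0 c1 c3 tau s n by (intro mult_right_mono divide_right_mono) auto
  also have "\<dots> = 3*(2+1/\<tau>)* sqrt(2+(1+2*\<tau>)\<^sup>2)/A*(c1/c3)* sqrt(s/n)"
    unfolding w_def by (simp add: mult_ac)
  finally show ?thesis using rb unfolding r_def by linarith
qed

lemma Xfacts:
  fixes X :: "real^'p^'n"
  assumes cols: "\<forall>i. column i X \<noteq> 0"
  shows "\<forall>i. real CARD('n) * a_X X \<le> column i X \<bullet> column i X"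
    and "\<forall>i j. i \<noteq> j \<longrightarrow> \<bar>column i X \<bullet> column j X\<bar> \<le> real CARD('n) * (b_X X * mu_X X)"
    and "b_X X \<ge> 0" and "mu_X X \<ge> 0"
proof -
  define N where "N = real CARD('n)"
  have N0: "N > 0" unfolding N_def by simp
  have fa: "finite {(norm (column i X))\<^sup>2 / N | i. True}"
    by (rule finite_subset[of _ "(\<lambda>i. (norm (column i X))\<^sup>2 / N) ` UNIV"]) auto
  have ale: "a_X X \<le> (norm (column i X))\<^sup>2 / N" for i
    unfolding a_X_def N_def[symmetric] by (rule Min_le[OF fa]) auto
  have bge: "(norm (column i X))\<^sup>2 / N \<le> b_X X" for i
    unfolding b_X_def N_def[symmetric] by (rule Max_ge[OF fa]) auto
  have diag: "N * a_X X \<le> column i X \<bullet> column i X" for i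
    using ale[of i] N0 by (simp add: power2_norm_eq_inner pos_le_divide_eq mult.commute)
  have nb: "(norm (column i X))\<^sup>2 \<le> N * b_X X" for i
    using bge[of i] N0 by (simp add: pos_divide_le_eq mult.commute)
  show "b_X X \<ge> 0"
  proof -
    obtain i :: 'p where True by simp
    have "0 \<le> (norm (column i X))\<^sup>2 / N" using N0 by simp
    thus ?thesis using bge[of i] by linarith
  qed
  define Q where "Q = (\<lambda>i j. \<bar>column i X \<bullet> column j X\<bar> / (norm (column i X) * norm (column j X)))"
  have fm: "finite {Q i j | i j. i \<noteq> j}"
    by (rule finite_subset[of _ "(\<lambda>(i,j). Q i j) ` UNIV"]) auto
  have card2: "2 \<le> CARD('p)" if "i \<noteq> j" for i j :: 'p
  proof -
    have "card {i,j} \<le> CARD('p)" by (rule card_mono) auto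
    thus ?thesis using that by simp
  qed
  have qle: "Q i j \<le> mu_X X" if "i \<noteq> j" for i j
    unfolding mu_X_def using card2[OF that] Q_def
    by simp (rule Max_ge[OF fm[unfolded Q_def]], use that in auto)
  have Q0: "Q i j \<ge> 0" for i j unfolding Q_def by simp
  show mu0: "mu_X X \<ge> 0"
  proof (cases "2 \<le> CARD('p)")
    case False thus ?thesis unfolding mu_X_def by simp
  next
    case True
    obtain i :: 'p where True by simp
    have "UNIV \<noteq> {i}" proof
      assume U: "UNIV = {i}"
      have "card (UNIV::'p set) = card {i}" by (rule arg_cong[where f=card, OF U])
      hence "CARD('p) = 1" by simp
      thus False using True by simp
    qed
    then obtain j where "j \<noteq> i" by auto
    thus ?thesis using qle[of j i] Q0[of j i] by linarith
  qed
  show "\<forall>i. real CARD('n) * a_X X \<le> column i X \<bullet> column i X" using diag N_def by simp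
  show "\<forall>i j. i \<noteq> j \<longrightarrow> \<bar>column i X \<bullet> column j X\<bar> \<le> real CARD('n) * (b_X X * mu_X X)"
  proof (intro allI impI)
    fix i j :: 'p assume ij: "i \<noteq> j"
    let ?x = "norm (column i X)" and ?y = "norm (column j X)"
    have xp: "?x > 0" "?y > 0" using cols by auto
    have e: "\<bar>column i X \<bullet> column j X\<bar> = Q i j * (?x * ?y)" unfolding Q_def using xp by simp
    have xy: "?x * ?y \<le> N * b_X X"
    proof -
      have "2 * (?x * ?y) \<le> ?x\<^sup>2 + ?y\<^sup>2" using sum_squares_bound[of ?x ?y] by (simp add: mult.assoc)
      thus ?thesis using nb[of i] nb[of j] by linarith
    qed
    have "Q i j * (?x * ?y) \<le> mu_X X * (?x * ?y)" using qle[OF ij] xp by (intro mult_right_mono) auto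
    also have "\<dots> \<le> mu_X X * (N * b_X X)" using xy mu0 by (intro mult_left_mono) auto
    finally show "\<bar>column i X \<bullet> column j X\<bar> \<le> real CARD('n) * (b_X X * mu_X X)"
      using e N_def by (simp add: mult_ac)
  qed
qed

lemma det:
  fixes X :: "real^'p^'n" and \<beta> h :: "real^'p" and N a bmu c1 c3 \<tau> :: real
  assumes diag: "\<forall>i. N*a \<le> column i X \<bullet> column i X"
    and off: "\<forall>i j. i \<noteq> j \<longrightarrow> \<bar>column i X \<bullet> column j X\<bar> \<le> N*bmu"
    and N: "N = real CARD('n)" and bmu: "bmu \<ge> 0"
    and c1: "c1 > 0" and c3: "c3 > 0" and tau: "\<tau> > 0"
    and ineq: "c3*(norm (X *v h))\<^sup>2 \<le> 2*(c1* sqrt N*l1norm h) - (2*(1+1/\<tau>)*c1* sqrt N)*(l1norm (\<beta>+h) - l1norm \<beta>)"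
    and cond: "a + bmu > 2*bmu*(3+4*\<tau>)*real (card (spt \<beta>))"
  shows "norm h \<le> (3*(2+1/\<tau>)* sqrt(2+(1+2*\<tau>)\<^sup>2)/(a+bmu)*(c1/c3))* sqrt(real (card (spt \<beta>))/N)"
proof -
  define S where "S = spt \<beta>"
  define hS :: "real^'p" where "hS = (\<chi> i. if i \<in> S then h$i else 0)"
  define hC :: "real^'p" where "hC = (\<chi> i. if i \<in> S then 0 else h$i)"
  define t where "t = l1norm hS"
  define u where "u = l1norm hC"
  define y2 where "y2 = (\<Sum>i\<in>UNIV. (hS$i)\<^sup>2)"
  define z2 where "z2 = (\<Sum>i\<in>UNIV. (hC$i)\<^sup>2)"
  define s where "s = real (card S)"
  define Bp where "Bp = N*bmu"
  define G where "G = (\<lambda>i j. column i X \<bullet> column j X)"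
  have N0: "N > 0" using N by simp
  have hsum: "h = hS + hC" unfolding hS_def hC_def by (simp add: vec_eq_iff)
  have t0: "t \<ge> 0" unfolding t_def l1norm_def by (simp add: sum_nonneg)
  have u0: "u \<ge> 0" unfolding u_def l1norm_def by (simp add: sum_nonneg)
  have y20: "y2 \<ge> 0" unfolding y2_def by (simp add: sum_nonneg)
  have z20: "z2 \<ge> 0" unfolding z2_def by (simp add: sum_nonneg)
  have l1h: "l1norm h = t + u"
    unfolding t_def u_def l1norm_def hS_def hC_def sum.distrib[symmetric] by (rule sum.cong) auto
  have l1v: "l1norm (\<beta>+h) - l1norm \<beta> \<ge> u - t"
  proof -
    have pw: "\<bar>(\<beta>+h)$i\<bar> \<ge> \<bar>\<beta>$i\<bar> - \<bar>hS$i\<bar> + \<bar>hC$i\<bar>" for i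
    proof (cases "i \<in> S")
      case True thus ?thesis unfolding hS_def hC_def by simp
    next
      case False hence "\<beta>$i = 0" unfolding S_def spt_def by simp
      thus ?thesis using False unfolding hS_def hC_def by simp
    qed
    have "(\<Sum>i\<in>UNIV. \<bar>\<beta>$i\<bar> - \<bar>hS$i\<bar> + \<bar>hC$i\<bar>) \<le> l1norm (\<beta>+h)"
      unfolding l1norm_def by (rule sum_mono) (use pw in auto)
    thus ?thesis unfolding t_def u_def l1norm_def by (simp add: sum.distrib sum_subtractf)
  qed
  have normh: "(norm h)\<^sup>2 = y2 + z2"
    unfolding power2_norm_eq_inner inner_vec_def y2_def z2_def hS_def hC_def sum.distrib[symmetric]
    by (rule sum.cong) (auto simp: power2_eq_square)
  have ts: "t\<^sup>2 \<le> s*y2"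
  proof -
    have "t = (\<Sum>i\<in>UNIV. (if i \<in> S then 1 else 0) * \<bar>hS$i\<bar>)"
      unfolding t_def l1norm_def hS_def by (rule sum.cong) auto
    hence "t\<^sup>2 \<le> (\<Sum>i\<in>UNIV. (if i \<in> S then 1 else (0::real))\<^sup>2) * (\<Sum>i\<in>UNIV. \<bar>hS$i\<bar>\<^sup>2)"
      using Cauchy_Schwarz_ineq_sum by metis
    also have "(\<Sum>i\<in>UNIV. (if i \<in> S then 1 else (0::real))\<^sup>2) = s"
    proof -
      have "(\<Sum>i\<in>UNIV. (if i \<in> S then 1 else (0::real))\<^sup>2) = (\<Sum>i\<in>UNIV. (if i \<in> S then 1 else (0::real)))"
        by (rule sum.cong) auto
      also have "\<dots> = s" unfolding s_def by (simp add: sum.If_cases)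
      finally show ?thesis .
    qed
    also have "(\<Sum>i\<in>UNIV. \<bar>hS$i\<bar>\<^sup>2) = y2" unfolding y2_def by simp
    finally show ?thesis by (simp add: mult.commute)
  qed
  have s0: "s \<ge> 0" unfolding s_def by simp
  have offG: "\<And>i j. i \<noteq> j \<Longrightarrow> \<bar>column i X \<bullet> column j X\<bar> \<le> Bp" using off Bp_def by auto
  have Bp0: "Bp \<ge> 0" unfolding Bp_def using N0 bmu by simp
  have dsum: "(\<Sum>i\<in>UNIV. g$i * g$i * (column i X \<bullet> column i X)) \<ge> N*a*(\<Sum>i\<in>UNIV. (g$i)\<^sup>2)" for g :: "real^'p"
  proof -
    have "N*a*(\<Sum>i\<in>UNIV. (g$i)\<^sup>2) = (\<Sum>i\<in>UNIV. g$i * g$i * (N*a))"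
      by (simp add: sum_distrib_left power2_eq_square mult_ac)
    also have "\<dots> \<le> (\<Sum>i\<in>UNIV. g$i * g$i * (column i X \<bullet> column i X))"
      by (rule sum_mono, rule mult_left_mono) (use diag in auto)
    finally show ?thesis .
  qed
  have gS: "inner (X *v hS) (X *v hS) \<ge> N*a*y2 - Bp*t\<^sup>2 + Bp*y2"
  proof -
    have g: "\<bar>inner (X *v hS) (X *v hS) - (\<Sum>i\<in>UNIV. hS$i * hS$i * (column i X \<bullet> column i X))\<bar>
       \<le> Bp * (l1norm hS * l1norm hS - (\<Sum>i\<in>UNIV. \<bar>hS$i\<bar> * \<bar>hS$i\<bar>))" by (rule gram[OF offG])
    have "(\<Sum>i\<in>UNIV. \<bar>hS$i\<bar> * \<bar>hS$i\<bar>) = y2" unfolding y2_def by (simp add: power2_eq_square)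
    thus ?thesis using g dsum[of hS] unfolding t_def y2_def[symmetric]
      by (simp add: power2_eq_square algebra_simps abs_le_iff)
  qed
  have gC: "inner (X *v hC) (X *v hC) \<ge> N*a*z2 - Bp*u\<^sup>2 + Bp*z2"
  proof -
    have g: "\<bar>inner (X *v hC) (X *v hC) - (\<Sum>i\<in>UNIV. hC$i * hC$i * (column i X \<bullet> column i X))\<bar>
       \<le> Bp * (l1norm hC * l1norm hC - (\<Sum>i\<in>UNIV. \<bar>hC$i\<bar> * \<bar>hC$i\<bar>))" by (rule gram[OF offG])
    have "(\<Sum>i\<in>UNIV. \<bar>hC$i\<bar> * \<bar>hC$i\<bar>) = z2" unfolding z2_def by (simp add: power2_eq_square)
    thus ?thesis using g dsum[of hC] unfolding u_def z2_def[symmetric]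
      by (simp add: power2_eq_square algebra_simps abs_le_iff)
  qed
  have gX: "\<bar>inner (X *v hS) (X *v hC)\<bar> \<le> Bp*t*u"
  proof -
    have g: "\<bar>inner (X *v hS) (X *v hC) - (\<Sum>i\<in>UNIV. hS$i * hC$i * (column i X \<bullet> column i X))\<bar>
       \<le> Bp * (l1norm hS * l1norm hC - (\<Sum>i\<in>UNIV. \<bar>hS$i\<bar> * \<bar>hC$i\<bar>))" by (rule gram[OF offG])
    have z1: "(\<Sum>i\<in>UNIV. hS$i * hC$i * (column i X \<bullet> column i X)) = 0" unfolding hS_def hC_def by (rule sum.neutral) auto
    have z2': "(\<Sum>i\<in>UNIV. \<bar>hS$i\<bar> * \<bar>hC$i\<bar>) = 0" unfolding hS_def hC_def by (rule sum.neutral) auto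
    show ?thesis using g unfolding z1 z2' t_def u_def by (simp add: mult.assoc)
  qed
  define F where "F = (norm (X *v h))\<^sup>2"
  define P where "P = inner (X *v hC) (X *v hC)"
  have Fexp: "F = inner (X *v hS) (X *v hS) + 2 * inner (X *v hS) (X *v hC) + P"
    unfolding F_def P_def power2_norm_eq_inner hsum matrix_vector_right_distrib
    by (simp add: inner_add_left inner_add_right inner_commute)
  have hF: "F \<ge> N*(a+bmu)*y2 - N*bmu*t\<^sup>2 - 2*N*bmu*t*u + P"
    using Fexp gS gX unfolding Bp_def by (simp add: algebra_simps abs_le_iff)
  have P0: "P \<ge> 0" unfolding P_def by simp
  have P1: "P \<ge> N*(a+bmu)*z2 - N*bmu*u\<^sup>2" using gC unfolding P_def Bp_def by (simp add: algebra_simps)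
  define lam where "lam = c1* sqrt N"
  have lam0: "lam > 0" unfolding lam_def using c1 N0 by simp
  have crl: "2*(1+1/\<tau>)*lam \<ge> 0" using lam0 tau by simp
  have F0: "F \<ge> 0" unfolding F_def by simp
  have main: "c3*F \<le> 2*lam*(t+u) - 2*(1+1/\<tau>)*lam*(u-t)"
  proof -
    have "2*(1+1/\<tau>)*lam*(u-t) \<le> 2*(1+1/\<tau>)*lam*(l1norm (\<beta>+h) - l1norm \<beta>)"
      using l1v crl by (intro mult_left_mono) auto
    thus ?thesis using ineq unfolding F_def lam_def l1h by (simp add: mult_ac)
  qed
  have rhs: "2*lam*(t+u) - 2*(1+1/\<tau>)*lam*(u-t) = 2*lam*((2+1/\<tau>)*t) - 2*lam*(u/\<tau>)"
    using tau by (simp add: field_simps)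
  have "0 \<le> c3*F" using c3 F0 by simp
  hence "2*lam*(u/\<tau>) \<le> 2*lam*((2+1/\<tau>)*t)" using main rhs by linarith
  hence "(2*lam)*(u/\<tau>) \<le> (2*lam)*((2+1/\<tau>)*t)" by (simp only: mult.assoc)
  hence "u/\<tau> \<le> (2+1/\<tau>)*t" by (rule mult_left_le_imp_le) (use lam0 in simp)
  hence "u \<le> ((2+1/\<tau>)*t)*\<tau>" using tau by (simp add: divide_le_eq)
  hence cone: "u \<le> (1+2*\<tau>)*t" using tau by (simp add: algebra_simps)
  have "0 \<le> 2*lam*(u/\<tau>)" using lam0 tau u0 by simp
  hence hc3: "c3*F \<le> 2*c1* sqrt N*(2+1/\<tau>)*t" using main rhs unfolding lam_def by (simp add: mult_ac)
  have cond': "a + bmu > 2*bmu*(3+4*\<tau>)* s" using cond unfolding s_def S_def .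
  have fa: "sqrt (y2+z2) \<le> 3*(2+1/\<tau>)* sqrt(2+(1+2*\<tau>)\<^sup>2)/(a+bmu)*(c1/c3)* sqrt(s/N)"
    by (rule final_arith[OF N0 c1 c3 tau t0 u0 y20 z20 s0 bmu hF P0 P1 ts cone hc3 cond'])
  have "norm h = sqrt (y2+z2)" using normh by (metis norm_ge_zero real_sqrt_unique)
  thus ?thesis using fa unfolding s_def S_def by simp
qed



theorem proposition2p2:
  fixes M :: "'w measure"
    and X :: "real^'p^'n" and \<beta> :: "real^'p" and \<epsilon> :: "'w \<Rightarrow> real^'n"
    and D :: "(real^'p) set" and G :: "real^'n \<Rightarrow> real"
    and \<psi> \<phi> :: "'n \<Rightarrow> real \<Rightarrow> real"
    and q c0 c1 c3 \<tau> :: real and \<beta>hat :: "'w \<Rightarrow> real^'p"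
  assumes "prob_space M"
    and cols: "\<forall>i. column i X \<noteq> 0"
    and eps_rv: "\<epsilon> \<in> borel_measurable M"
    and q: "0 < q" "q < 1" and c0: "c0 > 0"
    and c1: "c1 > 0"
    and i: "measure M {w \<in> space M. \<forall>v\<in>D.
              \<bar>\<epsilon> w \<bullet> (compw \<phi> (X *v v) - compw \<phi> (X *v \<beta>))\<bar>
                \<le> c1 * sqrt (real CARD('n)) * l1norm (v - \<beta>)} \<ge> 1 - c0 * q"
    and c3: "c3 > 0"
    and ii: "\<forall>v\<in>D. G (compw \<psi> (X *v v) - compw \<psi> (X *v \<beta>))
                  \<ge> c3 * (norm (X *v v - X *v \<beta>))\<^sup>2"
    and coh: "a_X X + b_X X * mu_X X > 6 * b_X X * real (card (spt \<beta>)) * mu_X X"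
    and tau: "\<tau> > 0"
    and tau_cond: "a_X X + b_X X * mu_X X
                     > 2 * b_X X * (3 + 4 * \<tau>) * real (card (spt \<beta>)) * mu_X X"
    and bh_rv: "\<beta>hat \<in> borel_measurable M"
    and bh_D: "\<forall>w\<in>space M. \<beta>hat w \<in> D"
    and bh_ineq: "\<forall>w\<in>space M.
         G (compw \<psi> (X *v \<beta>hat w) - compw \<psi> (X *v \<beta>))
           \<le> 2 * \<bar>\<epsilon> w \<bullet> (compw \<phi> (X *v \<beta>hat w) - compw \<phi> (X *v \<beta>))\<bar>
              - (2 * (1 + 1 / \<tau>) * c1 * sqrt (real CARD('n))) * (l1norm (\<beta>hat w) - l1norm \<beta>)"
  shows "measure M {w \<in> space M. norm (\<beta>hat w - \<beta>)
           \<le> (3 * (2 + 1 / \<tau>) * sqrt (2 + (1 + 2 * \<tau>)\<^sup>2) / (a_X X + b_X X * mu_X X) * (c1 / c3))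
              * sqrt (real (card (spt \<beta>)) / real CARD('n))} \<ge> 1 - c0 * q"
proof -
  interpret prob_space M by fact
  define N where "N = real CARD('n)"
  define K where "K = (3 * (2 + 1 / \<tau>) * sqrt (2 + (1 + 2 * \<tau>)\<^sup>2) / (a_X X + b_X X * mu_X X) * (c1 / c3))
              * sqrt (real (card (spt \<beta>)) / real CARD('n))"
  define E where "E = {w \<in> space M. \<forall>v\<in>D.
              \<bar>\<epsilon> w \<bullet> (compw \<phi> (X *v v) - compw \<phi> (X *v \<beta>))\<bar>
                \<le> c1 * sqrt (real CARD('n)) * l1norm (v - \<beta>)}"
  define T where "T = {w \<in> space M. norm (\<beta>hat w - \<beta>) \<le> K}"
  have XF1: "\<forall>i. N * a_X X \<le> column i X \<bullet> column i X" using Xfacts(1)[OF cols] N_def by simp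
  have XF2: "\<forall>i j. i \<noteq> j \<longrightarrow> \<bar>column i X \<bullet> column j X\<bar> \<le> N * (b_X X * mu_X X)"
    using Xfacts(2)[OF cols] N_def by simp
  have bmu: "b_X X * mu_X X \<ge> 0" using Xfacts(3,4)[OF cols] by simp
  have cond: "a_X X + b_X X * mu_X X > 2*(b_X X * mu_X X)*(3+4*\<tau>)*real (card (spt \<beta>))"
    using tau_cond by (simp add: mult_ac)
  have sub: "E \<subseteq> T"
  proof
    fix w assume "w \<in> E"
    hence w: "w \<in> space M" and ev: "\<forall>v\<in>D. \<bar>\<epsilon> w \<bullet> (compw \<phi> (X *v v) - compw \<phi> (X *v \<beta>))\<bar>
                \<le> c1 * sqrt (real CARD('n)) * l1norm (v - \<beta>)" unfolding E_def by auto
    define v where "v = \<beta>hat w"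
    define h where "h = v - \<beta>"
    have vD: "v \<in> D" using bh_D w v_def by auto
    have e1: "\<bar>\<epsilon> w \<bullet> (compw \<phi> (X *v v) - compw \<phi> (X *v \<beta>))\<bar> \<le> c1 * sqrt N * l1norm h"
      using ev vD unfolding N_def h_def by auto
    have e2: "G (compw \<psi> (X *v v) - compw \<psi> (X *v \<beta>)) \<ge> c3 * (norm (X *v h))\<^sup>2"
      using ii vD unfolding h_def by (simp add: matrix_vector_mult_diff_distrib)
    have e3: "G (compw \<psi> (X *v v) - compw \<psi> (X *v \<beta>))
           \<le> 2 * \<bar>\<epsilon> w \<bullet> (compw \<phi> (X *v v) - compw \<phi> (X *v \<beta>))\<bar>
              - (2 * (1 + 1 / \<tau>) * c1 * sqrt N) * (l1norm v - l1norm \<beta>)"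
      using bh_ineq w unfolding v_def N_def by auto
    have bv: "\<beta> + h = v" unfolding h_def by simp
    have ineq: "c3*(norm (X *v h))\<^sup>2 \<le> 2*(c1* sqrt N*l1norm h) - (2*(1+1/\<tau>)*c1* sqrt N)*(l1norm (\<beta>+h) - l1norm \<beta>)"
      unfolding bv using e1 e2 e3 by linarith
    have "norm h \<le> (3*(2+1/\<tau>)* sqrt(2+(1+2*\<tau>)\<^sup>2)/(a_X X + b_X X * mu_X X)*(c1/c3))* sqrt(real (card (spt \<beta>))/N)"
      by (rule det[OF XF1 XF2 N_def bmu c1 c3 tau ineq cond])
    thus "w \<in> T" unfolding T_def K_def N_def using w h_def v_def by simp
  qed
  have Tm: "T \<in> sets M" unfolding T_def using bh_rv by measurable
  show ?thesis
  proof (cases "E \<in> sets M")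
    case True
    have "measure M E \<le> measure M T" by (rule finite_measure_mono[OF sub Tm])
    thus ?thesis using i unfolding E_def[symmetric] T_def K_def by linarith
  next
    case False
    hence "measure M E = 0" by (rule measure_notin_sets)
    hence "1 - c0*q \<le> 0" using i unfolding E_def[symmetric] by simp
    moreover have "0 \<le> measure M T" by simp
    ultimately show ?thesis unfolding T_def K_def by linarith
  qed
qed

end
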